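(* Let $\mathcal{F}=\{U_1,\dots,U_n\}$ be a family of subsets of a topological space $\mathbf{R}$, let $K$ be a simplicial complex, and let $\gamma\colon C_*(K)\to C_*(\mathbf{R})$ be a nontrivial chain map constrained by $\mathcal{F}$. If $\bigcap_{i=1}^n U_i=\emptyset$, then $\gamma$ is a homological almost-embedding of $K$ in $\mathbf{R}$.
   Context: Coefficients are $\mathbb{Z}_2$; $C_*(K)$ is the simplicial chain complex of $K$ and $C_*(\mathbf{R})$ the singular chain complex of $\mathbf{R}$. For a proper subset $I\subsetneq[n]$ write $U(I)=\bigcap_{i\in[n]\setminus I}U_i$, and put $U([n])=\mathbf{R}$. A chain map $\gamma$ is constrained by $(\mathcal{F},\Phi)$ if $\Phi\colon K\to 2^{[n]}$ satisfies $\Phi(\emptyset)=\emptyset$ and $\Phi(\sigma\cap\tau)=\Phi(\sigma)\cap\Phi(\tau)$ for all $\sigma,\tau\in K$, and for every simplex $\sigma\in K$ the support of $\gamma(\sigma)$ (union of images of singular simplices with nonzero coefficient) is contained in $U(\Phi(\sigma))$; $\gamma$ is constrained by $\mathcal{F}$ if such a $\Phi$ exists. A chain map is nontrivial if each vertex is sent to a $0$-chain consisting of an odd number of points. A homological almost-embedding is a nontrivial chain map sending disjoint simplices of $K$ to chains with disjoint supports. *)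

theory Defs
  imports "HOL-Homology.Homology"
begin

type_synonym 'a ssimplex = "(nat \<Rightarrow> real) \<Rightarrow> 'a"

(* Z2-chains are represented as finite sets of generators (those with coefficient 1). *)

definition simplicial_complex :: "'v set set \<Rightarrow> bool" where
  "simplicial_complex K \<longleftrightarrow> (\<forall>\<sigma>\<in>K. finite \<sigma>) \<and> (\<forall>\<sigma>\<in>K. \<forall>\<tau>. \<tau> \<subseteq> \<sigma> \<longrightarrow> \<tau> \<in> K)"

definition z2_singular_chain :: "nat \<Rightarrow> 'a topology \<Rightarrow> 'a ssimplex set \<Rightarrow> bool" where
  "z2_singular_chain p X c \<longleftrightarrow> finite c \<and> (\<forall>f\<in>c. singular_simplex p X f)"

definition z2_singular_boundary :: "nat \<Rightarrow> 'a ssimplex set \<Rightarrow> 'a ssimplex set" where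
  "z2_singular_boundary p c =
     {g. odd (card {(f, k). f \<in> c \<and> k \<le> p \<and> singular_face p k f = g})}"

(* Z2 simplicial boundary of the simplex sigma, mapped by gamma:
   gamma(boundary sigma) = sum over facets sigma - {v} of gamma(sigma - {v}) *)
definition z2_gamma_of_boundary :: "('v set \<Rightarrow> 'a ssimplex set) \<Rightarrow> 'v set \<Rightarrow> 'a ssimplex set" where
  "z2_gamma_of_boundary \<gamma> \<sigma> = {g. odd (card {v \<in> \<sigma>. g \<in> \<gamma> (\<sigma> - {v})})}"

(* a chain map C_*(K) -> C_*(X) with Z2 coefficients, given by its values on the
   (nonempty) simplices of K; a simplex with card (p+1) is sent to a singular p-chain *)
definition z2_chain_map :: "'v set set \<Rightarrow> 'a topology \<Rightarrow> ('v set \<Rightarrow> 'a ssimplex set) \<Rightarrow> bool" where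
  "z2_chain_map K X \<gamma> \<longleftrightarrow>
     (\<forall>\<sigma>\<in>K. \<sigma> \<noteq> {} \<longrightarrow> z2_singular_chain (card \<sigma> - 1) X (\<gamma> \<sigma>)) \<and>
     (\<forall>\<sigma>\<in>K. card \<sigma> \<ge> 2 \<longrightarrow>
        z2_singular_boundary (card \<sigma> - 1) (\<gamma> \<sigma>) = z2_gamma_of_boundary \<gamma> \<sigma>)"

definition chain_support :: "nat \<Rightarrow> 'a ssimplex set \<Rightarrow> 'a set" where
  "chain_support p c = (\<Union>f\<in>c. f ` standard_simplex p)"

definition nontrivial_chain_map :: "'v set set \<Rightarrow> ('v set \<Rightarrow> 'a ssimplex set) \<Rightarrow> bool" where
  "nontrivial_chain_map K \<gamma> \<longleftrightarrow> (\<forall>v. {v} \<in> K \<longrightarrow> odd (card (\<gamma> {v})))"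

definition U_of :: "'a topology \<Rightarrow> nat \<Rightarrow> (nat \<Rightarrow> 'a set) \<Rightarrow> nat set \<Rightarrow> 'a set" where
  "U_of X n U I = (if I = {1..n} then topspace X else (\<Inter>i\<in>{1..n} - I. U i))"

definition constrained_by_with ::
  "'v set set \<Rightarrow> 'a topology \<Rightarrow> nat \<Rightarrow> (nat \<Rightarrow> 'a set) \<Rightarrow> ('v set \<Rightarrow> nat set)
     \<Rightarrow> ('v set \<Rightarrow> 'a ssimplex set) \<Rightarrow> bool" where
  "constrained_by_with K X n U \<Phi> \<gamma> \<longleftrightarrow>
     (\<forall>\<sigma>\<in>K. \<Phi> \<sigma> \<subseteq> {1..n}) \<and>
     \<Phi> {} = {} \<and>
     (\<forall>\<sigma>\<in>K. \<forall>\<tau>\<in>K. \<Phi> (\<sigma> \<inter> \<tau>) = \<Phi> \<sigma> \<inter> \<Phi> \<tau>) \<and>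
     (\<forall>\<sigma>\<in>K. \<sigma> \<noteq> {} \<longrightarrow> chain_support (card \<sigma> - 1) (\<gamma> \<sigma>) \<subseteq> U_of X n U (\<Phi> \<sigma>))"

definition constrained_by ::
  "'v set set \<Rightarrow> 'a topology \<Rightarrow> nat \<Rightarrow> (nat \<Rightarrow> 'a set) \<Rightarrow> ('v set \<Rightarrow> 'a ssimplex set) \<Rightarrow> bool" where
  "constrained_by K X n U \<gamma> \<longleftrightarrow> (\<exists>\<Phi>. constrained_by_with K X n U \<Phi> \<gamma>)"

definition homological_almost_embedding ::
  "'v set set \<Rightarrow> 'a topology \<Rightarrow> ('v set \<Rightarrow> 'a ssimplex set) \<Rightarrow> bool" where
  "homological_almost_embedding K X \<gamma> \<longleftrightarrow>
     z2_chain_map K X \<gamma> \<and> nontrivial_chain_map K \<gamma> \<and>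
     (\<forall>\<sigma>\<in>K. \<forall>\<tau>\<in>K. \<sigma> \<noteq> {} \<longrightarrow> \<tau> \<noteq> {} \<longrightarrow> \<sigma> \<inter> \<tau> = {} \<longrightarrow>
        chain_support (card \<sigma> - 1) (\<gamma> \<sigma>) \<inter> chain_support (card \<tau> - 1) (\<gamma> \<tau>) = {})"

end

theory Submission
  imports Defs
begin

lemma U_of_mem:
  assumes "x \<in> U_of X n U I" "i \<in> {1..n}" "i \<notin> I"
  shows "x \<in> U i"
  using assms unfolding U_of_def by (auto split: if_splits)

lemma U_of_top:
  assumes "x \<in> U_of X n U I" "I \<subseteq> {1..n}" "\<And>i. i \<in> {1..n} \<Longrightarrow> U i \<subseteq> topspace X"
  shows "x \<in> topspace X"
proof (cases "I = {1..n}")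
  case True thus ?thesis using assms by (simp add: U_of_def)
next
  case False
  then obtain i where i: "i \<in> {1..n}" "i \<notin> I" using assms(2) by blast
  have "x \<in> U i" using U_of_mem[OF assms(1) i] .
  thus ?thesis using assms(3)[OF i(1)] by blast
qed

theorem lemma26:
  fixes X :: "'a topology" and n :: nat and U :: "nat \<Rightarrow> 'a set"
    and K :: "'v set set" and \<gamma> :: "'v set \<Rightarrow> 'a ssimplex set"
  assumes "\<And>i. i \<in> {1..n} \<Longrightarrow> U i \<subseteq> topspace X"
    and "simplicial_complex K"
    and "z2_chain_map K X \<gamma>"
    and "nontrivial_chain_map K \<gamma>"
    and "constrained_by K X n U \<gamma>"
    and "topspace X \<inter> (\<Inter>i\<in>{1..n}. U i) = {}"
  shows "homological_almost_embedding K X \<gamma>"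
proof -
  obtain \<Phi> where P: "constrained_by_with K X n U \<Phi> \<gamma>"
    using assms(5) constrained_by_def by blast
  have "chain_support (card \<sigma> - 1) (\<gamma> \<sigma>) \<inter> chain_support (card \<tau> - 1) (\<gamma> \<tau>) = {}"
    if s: "\<sigma> \<in> K" "\<tau> \<in> K" "\<sigma> \<noteq> {}" "\<tau> \<noteq> {}" "\<sigma> \<inter> \<tau> = {}" for \<sigma> \<tau>
  proof (rule ccontr)
    assume "\<not> ?thesis"
    then obtain x where y1: "x \<in> chain_support (card \<sigma> - 1) (\<gamma> \<sigma>)"
      and y2: "x \<in> chain_support (card \<tau> - 1) (\<gamma> \<tau>)" by blast
    have c4: "\<forall>\<sigma>\<in>K. \<sigma> \<noteq> {} \<longrightarrow> chain_support (card \<sigma> - 1) (\<gamma> \<sigma>) \<subseteq> U_of X n U (\<Phi> \<sigma>)"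
      and c3: "\<forall>\<sigma>\<in>K. \<forall>\<tau>\<in>K. \<Phi> (\<sigma> \<inter> \<tau>) = \<Phi> \<sigma> \<inter> \<Phi> \<tau>"
      and c2: "\<Phi> {} = {}" and c1: "\<forall>\<sigma>\<in>K. \<Phi> \<sigma> \<subseteq> {1..n}"
      using P unfolding constrained_by_with_def by simp_all
    have x1: "x \<in> U_of X n U (\<Phi> \<sigma>)" using c4 s y1 by blast
    have x2: "x \<in> U_of X n U (\<Phi> \<tau>)" using c4 s y2 by blast
    have disj: "\<Phi> \<sigma> \<inter> \<Phi> \<tau> = {}"
      proof -
      have "\<Phi> (\<sigma> \<inter> \<tau>) = \<Phi> \<sigma> \<inter> \<Phi> \<tau>" using c3 s(1,2) by blast
      thus ?thesis using s(5) c2 by simp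
    qed
    have sub: "\<Phi> \<sigma> \<subseteq> {1..n}" using c1 s(1) by blast
    have xt: "x \<in> topspace X" using U_of_top[OF x1 sub assms(1)] by blast
    have "x \<in> U i" if i: "i \<in> {1..n}" for i
    proof (cases "i \<in> \<Phi> \<sigma>")
      case True
      then have "i \<notin> \<Phi> \<tau>" using disj by blast
      thus ?thesis using U_of_mem[OF x2 i] by blast
    next
      case False
      thus ?thesis using U_of_mem[OF x1 i] by blast
    qed
    thus False using xt assms(6) by blast
  qed
  thus ?thesis using assms(3,4) by (simp add: homological_almost_embedding_def)
qed

end
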